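(* Let $V$ be a vertex operator algebra of CFT-type that satisfies the $C_2$-cofiniteness condition. Let $M$ be a subspace of $V$ with $C_2(V)\subseteq M$ and $\mathbf{1}\notin M$. Then $M$ is an $MZ_{0,-1}$-subspace of $V$ and $r_{0,-1}(M)=\bigoplus_{n=1}^{\infty}V_n$.
   Context: A vertex operator algebra is a $\mathbb{Z}$-graded vertex algebra $V=\bigoplus_{n\in\mathbb{Z}}V_n$ over $\mathbb{C}$ (with $Y(u,z)=\sum_n u_nz^{-n-1}$, $\mathbf{1}\in V_0$, and $u_mV_n\subseteq V_{k+n-m-1}$ for $u\in V_k$), with $\dim V_n<\infty$, $V_n=0$ for $n$ sufficiently negative, and a conformal vector $\omega\in V_2$ whose modes $L(n)$ satisfy the Virasoro relations, $L(0)|_{V_n}=n$, and $Y(L(-1)v,z)=\frac{d}{dz}Y(v,z)$. $V$ is of CFT-type if $V=\bigoplus_{n\ge0}V_n$ and $V_0=\mathbb{C}\mathbf{1}$. $C_2(V)=\operatorname{span}_{\mathbb{C}}\{u_{-2}v:u,v\in V\}$; $V$ satisfies the $C_2$-cofiniteness condition if $\dim V/C_2(V)<\infty$. Iterated products are nested to the right: $v_{n_1}\cdots v_{n_t}v=v_{n_1}(\cdots(v_{n_t}v))$. For a subspace $M\subseteq V$: $r_{0,-1}(M)$ is the set of $v\in V$ for which there is $m\ge 0$ with $v_{n_1}\cdots v_{n_t}v\in M$ for all $t\ge m$ and all $n_1,\dots,n_t\in\{0,-1\}$. $lsr_{0,-1}(M)$ is the set of $v\in V$ such that for every $b\in V$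 there is $m\ge0$ with $b_sv_{n_1}\cdots v_{n_t}v\in M$ for all $t\ge m$ and all $s,n_1,\dots,n_t\in\{0,-1\}$. $rsr_{0,-1}(M)$ is the set of $v\in V$ such that for every $w\in V$ there is $m\ge 0$ with $(v_{n_1}\cdots v_{n_t}v)_nw\in M$ for all $t\ge m$ and all $n,n_1,\dots,n_t\in\{0,-1\}$. $sr_{0,-1}(M)=lsr_{0,-1}(M)\cap rsr_{0,-1}(M)$. $M$ is an $MZ_{0,-1}$-subspace of $V$ if $r_{0,-1}(M)=sr_{0,-1}(M)$. *)

theory Defs
  imports Complex_Main
begin

text \<open>The vertex operator Y(u,z) is
given by its modes: Y u n v = u_n v.\<close>

definition VOA ::
  "(complex \<Rightarrow> 'v::ab_group_add \<Rightarrow> 'v) \<Rightarrow> ('v \<Rightarrow> int \<Rightarrow> 'v \<Rightarrow> 'v) \<Rightarrow> 'v \<Rightarrow> 'v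
     \<Rightarrow> (int \<Rightarrow> 'v set) \<Rightarrow> bool" where
  "VOA smult Y vac om Vg \<longleftrightarrow>
     vector_space smult
     \<comment> \<open>bilinearity of the modes\<close>
   \<and> (\<forall>u n. Vector_Spaces.linear smult smult (Y u n))
   \<and> (\<forall>n v. Vector_Spaces.linear smult smult (\<lambda>u. Y u n v))
     \<comment> \<open>grading: V = direct sum of the subspaces V_n\<close>
   \<and> (\<forall>n. module.subspace smult (Vg n))
   \<and> (\<forall>v. v \<in> module.span smult (\<Union>n. Vg n))
   \<and> (\<forall>n. Vg n \<inter> module.span smult (\<Union>m\<in>-{n}. Vg m) = {0})
   \<and> (\<forall>n. \<exists>S. finite S \<and> module.span smult S = Vg n)
   \<and> (\<exists>N. \<forall>n<N. Vg n = {0})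
   \<and> vac \<in> Vg 0
   \<and> (\<forall>k n m u v. u \<in> Vg k \<longrightarrow> v \<in> Vg n \<longrightarrow> Y u m v \<in> Vg (k + n - m - 1))
     \<comment> \<open>truncation\<close>
   \<and> (\<forall>u v. \<exists>N. \<forall>n\<ge>N. Y u n v = 0)
     \<comment> \<open>vacuum axioms\<close>
   \<and> (\<forall>n v. Y vac n v = (if n = -1 then v else 0))
   \<and> (\<forall>u. Y u (-1) vac = u)
   \<and> (\<forall>u n. n \<ge> 0 \<longrightarrow> Y u n vac = 0)
     \<comment> \<open>Jacobi (Borcherds) identity; both sums are finite by truncation\<close>
   \<and> (\<forall>u v w m n l. \<forall>\<^sub>F N in sequentially.
        (\<Sum>i\<le>N. smult (of_int m gchoose i) (Y (Y u (l + int i) v) (m + n - int i) w))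
      = (\<Sum>i\<le>N. smult ((-1) ^ i * (of_int l gchoose i))
            (Y u (m + l - int i) (Y v (n + int i) w)
             - smult ((-1) powi l) (Y v (n + l - int i) (Y u (m + int i) w)))))
     \<comment> \<open>conformal vector, L(n) = omega_(n+1)\<close>
   \<and> om \<in> Vg 2
   \<and> (\<exists>c::complex. \<forall>m n v.
        Y om (m + 1) (Y om (n + 1) v) - Y om (n + 1) (Y om (m + 1) v)
      = smult (of_int (m - n)) (Y om (m + n + 1) v)
        + (if m + n = 0 then smult ((of_int m ^ 3 - of_int m) / 12 * c) v else 0))
   \<and> (\<forall>n v. v \<in> Vg n \<longrightarrow> Y om 1 v = smult (of_int n) v)
     \<comment> \<open>L(-1)-derivative property: Y(L(-1)v,z) = d/dz Y(v,z)\<close>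
   \<and> (\<forall>v n. Y (Y om 0 v) n = (\<lambda>w. smult (- of_int n) (Y v (n - 1) w)))"

definition CFT_type ::
  "(complex \<Rightarrow> 'v::ab_group_add \<Rightarrow> 'v) \<Rightarrow> 'v \<Rightarrow> (int \<Rightarrow> 'v set) \<Rightarrow> bool" where
  "CFT_type smult vac Vg \<longleftrightarrow> (\<forall>n<0. Vg n = {0}) \<and> Vg 0 = module.span smult {vac}"

definition C2 :: "(complex \<Rightarrow> 'v::ab_group_add \<Rightarrow> 'v) \<Rightarrow> ('v \<Rightarrow> int \<Rightarrow> 'v \<Rightarrow> 'v) \<Rightarrow> 'v set" where
  "C2 smult Y = module.span smult {Y u (-2) v | u v. True}"

text \<open>dim V/C_2(V) < infinity, i.e. C_2(V) has finite codimension.\<close>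
definition C2_cofinite :: "(complex \<Rightarrow> 'v::ab_group_add \<Rightarrow> 'v) \<Rightarrow> ('v \<Rightarrow> int \<Rightarrow> 'v \<Rightarrow> 'v) \<Rightarrow> bool" where
  "C2_cofinite smult Y \<longleftrightarrow> (\<exists>S. finite S \<and> module.span smult (S \<union> C2 smult Y) = UNIV)"

text \<open>iter_prod Y v [n1,...,nt] w = v_{n1}(v_{n2}(... (v_{nt} w)))\<close>
definition iter_prod :: "('v \<Rightarrow> int \<Rightarrow> 'v \<Rightarrow> 'v) \<Rightarrow> 'v \<Rightarrow> int list \<Rightarrow> 'v \<Rightarrow> 'v" where
  "iter_prod Y v ns w = foldr (\<lambda>n x. Y v n x) ns w"

definition r01 :: "('v \<Rightarrow> int \<Rightarrow> 'v \<Rightarrow> 'v) \<Rightarrow> 'v set \<Rightarrow> 'v set" where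
  "r01 Y M = {v. \<exists>m::nat. \<forall>ns. set ns \<subseteq> {0, -1} \<and> m \<le> length ns
                 \<longrightarrow> iter_prod Y v ns v \<in> M}"

definition lsr01 :: "('v \<Rightarrow> int \<Rightarrow> 'v \<Rightarrow> 'v) \<Rightarrow> 'v set \<Rightarrow> 'v set" where
  "lsr01 Y M = {v. \<forall>b. \<exists>m::nat. \<forall>s ns. s \<in> {0, -1} \<and> set ns \<subseteq> {0, -1} \<and> m \<le> length ns
                 \<longrightarrow> Y b s (iter_prod Y v ns v) \<in> M}"

definition rsr01 :: "('v \<Rightarrow> int \<Rightarrow> 'v \<Rightarrow> 'v) \<Rightarrow> 'v set \<Rightarrow> 'v set" where
  "rsr01 Y M = {v. \<forall>w. \<exists>m::nat. \<forall>n ns. n \<in> {0, -1} \<and> set ns \<subseteq> {0, -1} \<and> m \<le> length ns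
                 \<longrightarrow> Y (iter_prod Y v ns v) n w \<in> M}"

definition sr01 :: "('v \<Rightarrow> int \<Rightarrow> 'v \<Rightarrow> 'v) \<Rightarrow> 'v set \<Rightarrow> 'v set" where
  "sr01 Y M = lsr01 Y M \<inter> rsr01 Y M"

definition MZ01_subspace :: "('v \<Rightarrow> int \<Rightarrow> 'v \<Rightarrow> 'v) \<Rightarrow> 'v set \<Rightarrow> bool" where
  "MZ01_subspace Y M \<longleftrightarrow> r01 Y M = sr01 Y M"

end

theory Submission
  imports Defs
begin

locale voa =
  fixes smult :: "complex \<Rightarrow> 'v::ab_group_add \<Rightarrow> 'v"
    and Y :: "'v \<Rightarrow> int \<Rightarrow> 'v \<Rightarrow> 'v"
    and vac om :: 'v
    and Vg :: "int \<Rightarrow> 'v set"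
  assumes voa_ax: "VOA smult Y vac om Vg"
begin

lemma ax:
  "vector_space smult"
  "\<forall>u n. Vector_Spaces.linear smult smult (Y u n)"
  "\<forall>n v. Vector_Spaces.linear smult smult (\<lambda>u. Y u n v)"
  "\<forall>n. module.subspace smult (Vg n)"
  "\<forall>v. v \<in> module.span smult (\<Union>n. Vg n)"
  "\<forall>n. Vg n \<inter> module.span smult (\<Union>m\<in>-{n}. Vg m) = {0}"
  "vac \<in> Vg 0"
  "\<forall>k n m u v. u \<in> Vg k \<longrightarrow> v \<in> Vg n \<longrightarrow> Y u m v \<in> Vg (k + n - m - 1)"
  "\<forall>n v. Y vac n v = (if n = -1 then v else 0)"
  "\<forall>u. Y u (-1) vac = u"
  "\<forall>u n. n \<ge> 0 \<longrightarrow> Y u n vac = 0"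
  "\<forall>u v w m n l. \<forall>\<^sub>F N in sequentially.
        (\<Sum>i\<le>N. smult (of_int m gchoose i) (Y (Y u (l + int i) v) (m + n - int i) w))
      = (\<Sum>i\<le>N. smult ((-1) ^ i * (of_int l gchoose i))
            (Y u (m + l - int i) (Y v (n + int i) w)
             - smult ((-1) powi l) (Y v (n + l - int i) (Y u (m + int i) w))))"
  "\<forall>v n. Y (Y om 0 v) n = (\<lambda>w. smult (- of_int n) (Y v (n - 1) w))"
  using voa_ax unfolding VOA_def apply - apply (elim conjE; assumption)+ done

sublocale vector_space smult
  by (rule ax(1))

lemma linR1: "Y u n (a + b) = Y u n a + Y u n b"
proof -
  have "Vector_Spaces.linear smult smult (Y u n)" using ax(2) by blast
  then show ?thesis unfolding Vector_Spaces.linear_iff by blast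
qed
lemma linR2: "Y u n (smult c a) = smult c (Y u n a)"
proof -
  have "Vector_Spaces.linear smult smult (Y u n)" using ax(2) by blast
  then show ?thesis unfolding Vector_Spaces.linear_iff by blast
qed
lemmas linR = linR1 linR2
lemma linL1: "Y (a + b) n w = Y a n w + Y b n w"
proof -
  have "Vector_Spaces.linear smult smult (\<lambda>u. Y u n w)" using ax(3) by blast
  then show ?thesis unfolding Vector_Spaces.linear_iff by blast
qed
lemma linL2: "Y (smult c a) n w = smult c (Y a n w)"
proof -
  have "Vector_Spaces.linear smult smult (\<lambda>u. Y u n w)" using ax(3) by blast
  then show ?thesis unfolding Vector_Spaces.linear_iff by blast
qed
lemmas linL = linL1 linL2

lemma linR0[simp]: "Y u n 0 = 0"
proof -
  have "Y u n (smult 0 0) = smult 0 (Y u n 0)" by (rule linR2)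
  then show ?thesis by simp
qed

lemma linL0[simp]: "Y 0 n w = 0"
proof -
  have "Y (smult 0 0) n w = smult 0 (Y 0 n w)" by (rule linL2)
  then show ?thesis by simp
qed

lemma linR_diff: "Y u n (a - b) = Y u n a - Y u n b"
proof -
  have "Y u n (a - b) + Y u n b = Y u n ((a - b) + b)" by (rule linR1[symmetric])
  then have "Y u n (a - b) + Y u n b = Y u n a" by simp
  then show ?thesis by (simp add: eq_diff_eq)
qed
lemma linL_diff: "Y (a - b) n w = Y a n w - Y b n w"
proof -
  have "Y (a - b) n w + Y b n w = Y ((a - b) + b) n w" by (rule linL1[symmetric])
  then have "Y (a - b) n w + Y b n w = Y a n w" by simp
  then show ?thesis by (simp add: eq_diff_eq)
qed

lemma Vg_sub: "subspace (Vg n)" using ax by blast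
lemma Vg_span: "v \<in> span (\<Union>n. Vg n)" using ax by blast
lemma Vg_direct: "Vg n \<inter> span (\<Union>m\<in>-{n}. Vg m) = {0}" using ax by blast
lemma vac_Vg: "vac \<in> Vg 0" using ax by blast
lemma Y_grade: "u \<in> Vg k \<Longrightarrow> v \<in> Vg n \<Longrightarrow> Y u m v \<in> Vg (k + n - m - 1)"
  using ax(8) by blast
lemma vac_Y: "Y vac n v = (if n = -1 then v else 0)" using ax(9) by blast
lemma Y_vac: "Y u (-1) vac = u" using ax(10) by blast
lemma Y_vac_pos: "n \<ge> 0 \<Longrightarrow> Y u n vac = 0" using ax(11) by blast
lemma borch: "\<forall>\<^sub>F N in sequentially.
        (\<Sum>i\<le>N. smult (of_int m gchoose i) (Y (Y u (l + int i) v) (m + n - int i) w))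
      = (\<Sum>i\<le>N. smult ((-1) ^ i * (of_int l gchoose i))
            (Y u (m + l - int i) (Y v (n + int i) w)
             - smult ((-1) powi l) (Y v (n + l - int i) (Y u (m + int i) w))))"
  using ax(12) by blast
lemma Lm1: "Y (Y om 0 v) n w = smult (- of_int n) (Y v (n - 1) w)"
  using ax(13) by metis

lemma lin_span_into:
  assumes lin1: "\<And>a b. f (a + b) = f a + f b" and lin2: "\<And>c a. f (smult c a) = smult c (f a)"
    and S: "subspace S" and G: "\<And>x. x \<in> G \<Longrightarrow> f x \<in> S" and x: "x \<in> span G"
  shows "f x \<in> S"
proof -
  have "subspace {x. f x \<in> S}"
    unfolding subspace_def
  proof (intro conjI allI impI ballI)
    have "f 0 = 0" using lin2[of 0 0] by simp
    then show "0 \<in> {x. f x \<in> S}" using S subspace_0 by auto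
  qed (auto simp: lin1 lin2 S subspace_add subspace_scale)
  then show ?thesis using span_induct[OF x, of "\<lambda>x. f x \<in> S"] G by auto
qed


lemma sum_first: "(\<And>i. i > 0 \<Longrightarrow> g i = 0) \<Longrightarrow> (\<Sum>i\<le>(N::nat). g i) = (g 0 :: 'a::comm_monoid_add)"
  by (induction N) auto

lemma sum_in: "subspace S \<Longrightarrow> (\<And>i. i > 0 \<Longrightarrow> g i \<in> S) \<Longrightarrow> (\<Sum>i\<le>(N::nat). g i) - g 0 \<in> S"
proof (induction N)
  case 0 then show ?case by (simp add: subspace_0)
next
  case (Suc N)
  have "(\<Sum>i\<le>Suc N. g i) - g 0 = ((\<Sum>i\<le>N. g i) - g 0) + g (Suc N)" by simp
  moreover have "((\<Sum>i\<le>N. g i) - g 0) + g (Suc N) \<in> S"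
    using Suc by (intro subspace_add) auto
  ultimately show ?case by (simp add: algebra_simps)
qed

lemma sum_all_in: "subspace S \<Longrightarrow> (\<And>i. g i \<in> S) \<Longrightarrow> (\<Sum>i\<le>N. g i) \<in> S"
  by (simp add: subspace_sum)

lemma borch_ex: "\<exists>N.
        (\<Sum>i\<le>N. smult (of_int m gchoose i) (Y (Y u (l + int i) v) (m + n - int i) w))
      = (\<Sum>i\<le>N. smult ((-1) ^ i * (of_int l gchoose i))
            (Y u (m + l - int i) (Y v (n + int i) w)
             - smult ((-1) powi l) (Y v (n + l - int i) (Y u (m + int i) w))))"
  using borch[of m u l v n w] unfolding eventually_sequentially by blast

abbreviation C2s where "C2s \<equiv> C2 smult Y"

lemma C2_sub: "subspace C2s" unfolding C2_def by simp

lemma C2_gen: "Y u (-2) v \<in> C2s" unfolding C2_def by (rule span_base) blast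

lemma C2_neg_aux: "2 \<le> k \<Longrightarrow> \<forall>u w. Y u (-k) w \<in> C2s"
proof (induction k rule: int_ge_induct)
  case base then show ?case using C2_gen by simp
next
  case (step k)
  show ?case
  proof (intro allI)
    fix u w
    have "Y (Y om 0 u) (-k) w = smult (of_int k) (Y u (-k-1) w)" by (simp add: Lm1)
    then have "Y u (-k-1) w = smult (1 / of_int k) (Y (Y om 0 u) (-k) w)"
      using step(1) by simp
    moreover have "Y (Y om 0 u) (-k) w \<in> C2s" using step by blast
    ultimately have "Y u (-k-1) w \<in> C2s" using C2_sub subspace_scale by metis
    moreover have "- (k + 1) = -k - 1" by simp
    ultimately show "Y u (- (k + 1)) w \<in> C2s" by metis
  qed
qed

lemma C2_neg: "k \<le> -2 \<Longrightarrow> Y u k w \<in> C2s"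
  using C2_neg_aux[of "-k"] by simp


lemma C2_left_gen: "s \<le> 0 \<Longrightarrow> Y u s (Y a (-2) b) \<in> C2s"
proof -
  assume s: "s \<le> 0"
  obtain N where eq: "(\<Sum>i\<le>N. smult (of_int s gchoose i) (Y (Y u (0 + int i) a) (s + -2 - int i) b))
      = (\<Sum>i\<le>N. smult ((-1) ^ i * (of_int 0 gchoose i))
            (Y u (s + 0 - int i) (Y a (-2 + int i) b)
             - smult ((-1) powi 0) (Y a (-2 + 0 - int i) (Y u (s + int i) b))))"
    using borch_ex[of s u 0 a "-2" b] by blast
  have L: "(\<Sum>i\<le>N. smult (of_int s gchoose i) (Y (Y u (0 + int i) a) (s + -2 - int i) b)) \<in> C2s"
    by (rule sum_all_in[OF C2_sub], rule subspace_scale[OF C2_sub], rule C2_neg) (use s in simp)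
  have R: "(\<Sum>i\<le>N. smult ((-1) ^ i * (of_int 0 gchoose i))
            (Y u (s + 0 - int i) (Y a (-2 + int i) b)
             - smult ((-1) powi 0) (Y a (-2 + 0 - int i) (Y u (s + int i) b))))
        = Y u s (Y a (-2) b) - Y a (-2) (Y u s b)"
    by (subst sum_first) (auto simp: gbinomial_0_left)
  have d: "Y u s (Y a (-2) b) - Y a (-2) (Y u s b) \<in> C2s"
    using L unfolding eq R .
  have "(Y u s (Y a (-2) b) - Y a (-2) (Y u s b)) + Y a (-2) (Y u s b) \<in> C2s"
    by (rule subspace_add[OF C2_sub d C2_gen])
  then show ?thesis by simp
qed

lemma C2_left: "s \<le> 0 \<Longrightarrow> c \<in> C2s \<Longrightarrow> Y u s c \<in> C2s"
  apply (rule lin_span_into[where G="{Y u (-2) v | u v. True}", OF linR1 linR2 C2_sub])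
  using C2_left_gen by (auto simp: C2_def)

lemma C2_right_gen: "s \<le> 0 \<Longrightarrow> Y (Y a (-2) b) s w \<in> C2s"
proof -
  assume s: "s \<le> 0"
  obtain N where eq: "(\<Sum>i\<le>N. smult (of_int 0 gchoose i) (Y (Y a (-2 + int i) b) (0 + s - int i) w))
      = (\<Sum>i\<le>N. smult ((-1) ^ i * (of_int (-2) gchoose i))
            (Y a (0 + -2 - int i) (Y b (s + int i) w)
             - smult ((-1) powi (-2)) (Y b (s + -2 - int i) (Y a (0 + int i) w))))"
    using borch_ex[of 0 a "-2" b s w] by blast
  have R: "(\<Sum>i\<le>N. smult ((-1) ^ i * (of_int (-2) gchoose i))
            (Y a (0 + -2 - int i) (Y b (s + int i) w)
             - smult ((-1) powi (-2)) (Y b (s + -2 - int i) (Y a (0 + int i) w)))) \<in> C2s"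
    apply (rule sum_all_in[OF C2_sub], rule subspace_scale[OF C2_sub], rule subspace_diff[OF C2_sub])
     apply (rule C2_neg, simp)
    apply (rule subspace_scale[OF C2_sub], rule C2_neg) using s by simp
  have L: "(\<Sum>i\<le>N. smult (of_int 0 gchoose i) (Y (Y a (-2 + int i) b) (0 + s - int i) w))
      = Y (Y a (-2) b) s w"
    by (subst sum_first) (auto simp: gbinomial_0_left)
  show ?thesis using R unfolding eq[symmetric] L .
qed

lemma C2_right: "s \<le> 0 \<Longrightarrow> c \<in> C2s \<Longrightarrow> Y c s w \<in> C2s"
  apply (rule lin_span_into[where G="{Y u (-2) v | u v. True}" and f="\<lambda>c. Y c s w", OF linL1 linL2 C2_sub])
  using C2_right_gen by (auto simp: C2_def)

lemma skew: "Y v 0 v \<in> C2s"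
proof -
  obtain N where eq: "(\<Sum>i\<le>N. smult (of_int (-1) gchoose i) (Y (Y v (0 + int i) v) (-1 + 0 - int i) vac))
      = (\<Sum>i\<le>N. smult ((-1) ^ i * (of_int 0 gchoose i))
            (Y v (-1 + 0 - int i) (Y v (0 + int i) vac)
             - smult ((-1) powi 0) (Y v (0 + 0 - int i) (Y v (-1 + int i) vac))))"
    using borch_ex[of "-1" v 0 v 0 vac] by blast
  have R: "(\<Sum>i\<le>N. smult ((-1) ^ i * (of_int 0 gchoose i))
            (Y v (-1 + 0 - int i) (Y v (0 + int i) vac)
             - smult ((-1) powi 0) (Y v (0 + 0 - int i) (Y v (-1 + int i) vac)))) = - Y v 0 v"
    by (subst sum_first) (auto simp: gbinomial_0_left Y_vac Y_vac_pos)
  have L: "(\<Sum>i\<le>N. smult (of_int (-1) gchoose i) (Y (Y v (0 + int i) v) (-1 + 0 - int i) vac))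
       - smult (of_int (-1) gchoose 0) (Y (Y v (0 + int 0) v) (-1 + 0 - int 0) vac) \<in> C2s"
    apply (rule sum_in[OF C2_sub])
    apply (rule subspace_scale[OF C2_sub], rule C2_neg) by simp
  then have "- Y v 0 v - Y v 0 v \<in> C2s" using eq R by (simp add: Y_vac)
  then have "- (- Y v 0 v - Y v 0 v) \<in> C2s" by (rule subspace_neg[OF C2_sub])
  then have "smult (1/2) (Y v 0 v + Y v 0 v) \<in> C2s" using subspace_scale[OF C2_sub] by simp
  moreover have "Y v 0 v + Y v 0 v = smult 2 (Y v 0 v)"
    using scale_left_distrib[of 1 1 "Y v 0 v"] by simp
  ultimately show ?thesis by simp
qed

lemma comm0: "Y v 0 (Y v (-1) y) = Y v (-1) (Y v 0 y) + Y (Y v 0 v) (-1) y"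
proof -
  obtain N where eq: "(\<Sum>i\<le>N. smult (of_int 0 gchoose i) (Y (Y v (0 + int i) v) (0 + -1 - int i) y))
      = (\<Sum>i\<le>N. smult ((-1) ^ i * (of_int 0 gchoose i))
            (Y v (0 + 0 - int i) (Y v (-1 + int i) y)
             - smult ((-1) powi 0) (Y v (-1 + 0 - int i) (Y v (0 + int i) y))))"
    using borch_ex[of 0 v 0 v "-1" y] by blast
  have L: "(\<Sum>i\<le>N. smult (of_int 0 gchoose i) (Y (Y v (0 + int i) v) (0 + -1 - int i) y))
      = Y (Y v 0 v) (-1) y"
    by (subst sum_first) (auto simp: gbinomial_0_left)
  have R: "(\<Sum>i\<le>N. smult ((-1) ^ i * (of_int 0 gchoose i))
            (Y v (0 + 0 - int i) (Y v (-1 + int i) y)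
             - smult ((-1) powi 0) (Y v (-1 + 0 - int i) (Y v (0 + int i) y))))
      = Y v 0 (Y v (-1) y) - Y v (-1) (Y v 0 y)"
    by (subst sum_first) (auto simp: gbinomial_0_left)
  show ?thesis using L R eq by (simp add: algebra_simps)
qed


definition F where "F d = span (\<Union>e\<in>{d..}. Vg e)"

lemma F_sub: "subspace (F d)" unfolding F_def by simp

lemma Vg_F: "e \<ge> d \<Longrightarrow> x \<in> Vg e \<Longrightarrow> x \<in> F d"
  unfolding F_def by (rule span_base) auto

lemma F_mono: "d \<le> d' \<Longrightarrow> F d' \<subseteq> F d"
  unfolding F_def by (rule span_mono) (auto intro: order_trans)

lemma Y_F_gen: "u \<in> Vg k \<Longrightarrow> k \<ge> a \<Longrightarrow> w \<in> F d \<Longrightarrow> Y u m w \<in> F (a + d - m - 1)"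
proof -
  assume u: "u \<in> Vg k" and k: "k \<ge> a" and w: "w \<in> F d"
  have "Y u m x \<in> F (a + d - m - 1)" if "x \<in> (\<Union>e\<in>{d..}. Vg e)" for x
  proof -
    from that obtain e where "e \<ge> d" "x \<in> Vg e" by auto
    then show ?thesis using Y_grade[OF u, of x e m] k by (intro Vg_F[of "a + d - m - 1" "k + e - m - 1"]) auto
  qed
  then show ?thesis
    using lin_span_into[where G="\<Union>e\<in>{d..}. Vg e" and x=w and f="Y u m", OF linR1 linR2 F_sub _ w[unfolded F_def]] by blast
qed

lemma Y_F: "u \<in> F a \<Longrightarrow> w \<in> F d \<Longrightarrow> Y u m w \<in> F (a + d - m - 1)"
  apply (rule lin_span_into[where G="\<Union>e\<in>{a..}. Vg e" and f="\<lambda>u. Y u m w", OF linL1 linL2 F_sub])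
   apply (auto intro!: Y_F_gen)[1]
  by (simp add: F_def)

end

locale voa2 = voa +
  assumes cft: "CFT_type smult vac Vg" and cof: "C2_cofinite smult Y"
begin

lemma Vg_neg: "n < 0 \<Longrightarrow> Vg n = {0}" using cft unfolding CFT_type_def by blast
lemma Vg_0: "Vg 0 = span {vac}" using cft unfolding CFT_type_def by blast

lemma F0: "F 0 = UNIV"
proof -
  have "\<Union>(range Vg) \<subseteq> F 0"
  proof
    fix x assume "x \<in> \<Union>(range Vg)"
    then obtain n where x: "x \<in> Vg n" by blast
    show "x \<in> F 0"
    proof (cases "n < 0")
      case True then show ?thesis using x Vg_neg F_sub subspace_0 by auto
    next
      case False then show ?thesis using x by (intro Vg_F[where e=n]) auto
    qed
  qed
  then have "span (\<Union>(range Vg)) \<subseteq> F 0" using span_minimal F_sub by blast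
  then show ?thesis using Vg_span by blast
qed

definition L where "L D = span (\<Union>e\<in>{..<D}. Vg e)"

lemma L_mono: "D \<le> D' \<Longrightarrow> L D \<subseteq> L D'"
  unfolding L_def by (rule span_mono) (auto intro: order_less_le_trans)

lemma bounded: "\<exists>D. v \<in> L D"
proof -
  have "subspace {v. \<exists>D. v \<in> L D}"
    unfolding subspace_def
  proof (intro conjI allI ballI)
    show "0 \<in> {v. \<exists>D. v \<in> L D}" by (auto simp: L_def span_zero)
  next
    fix x y assume "x \<in> {v. \<exists>D. v \<in> L D}" "y \<in> {v. \<exists>D. v \<in> L D}"
    then obtain D1 D2 where "x \<in> L D1" "y \<in> L D2" by blast
    moreover have "L D1 \<subseteq> L (max D1 D2)" "L D2 \<subseteq> L (max D1 D2)" by (rule L_mono, simp)+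
    ultimately have "x \<in> L (max D1 D2)" "y \<in> L (max D1 D2)" by blast+
    then show "x + y \<in> {v. \<exists>D. v \<in> L D}" by (auto simp: L_def intro: span_add)
  next
    fix c x assume "x \<in> {v. \<exists>D. v \<in> L D}"
    then show "smult c x \<in> {v. \<exists>D. v \<in> L D}" by (auto simp: L_def intro: span_scale)
  qed
  moreover have "\<And>x. x \<in> \<Union>(range Vg) \<Longrightarrow> \<exists>D. x \<in> L D"
  proof -
    fix x assume "x \<in> \<Union>(range Vg)"
    then obtain n where "x \<in> Vg n" by blast
    then have "x \<in> L (n + 1)" unfolding L_def by (intro span_base) auto
    then show "\<exists>D. x \<in> L D" by blast
  qed
  ultimately show ?thesis using span_induct[OF Vg_span, of "\<lambda>v. \<exists>D. v \<in> L D"] by blast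
qed

lemma bounded_fin: "finite S \<Longrightarrow> \<exists>D. S \<subseteq> L D"
proof (induction S rule: finite_induct)
  case empty then show ?case by blast
next
  case (insert x S)
  then obtain D1 where "S \<subseteq> L D1" by blast
  moreover obtain D2 where "x \<in> L D2" using bounded by blast
  moreover have "L D1 \<subseteq> L (max D1 D2)" "L D2 \<subseteq> L (max D1 D2)" by (rule L_mono, simp)+
  ultimately have "insert x S \<subseteq> L (max D1 D2)" by blast
  then show ?case by blast
qed

lemma C2_graded: "c \<in> C2s \<Longrightarrow> c \<in> span (\<Union>e. Vg e \<inter> C2s)"
proof -
  assume c: "c \<in> C2s"
  have g1: "Y u (-2) w \<in> span (\<Union>e. Vg e \<inter> C2s)" if u: "u \<in> Vg k" and w: "w \<in> Vg e" for u k w e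
  proof -
    have "Y u (-2) w \<in> Vg (k + e - (-2) - 1)" by (rule Y_grade[OF u w])
    then have "Y u (-2) w \<in> Vg (k + e - (-2) - 1) \<inter> C2s" using C2_gen by (rule IntI)
    then have "Y u (-2) w \<in> (\<Union>e. Vg e \<inter> C2s)" by (rule UN_I[OF UNIV_I])
    then show ?thesis by (rule span_base)
  qed
  have g2: "Y u (-2) v \<in> span (\<Union>e. Vg e \<inter> C2s)" if u: "u \<in> Vg k" for u k v
  proof -
    have "\<And>w. w \<in> (\<Union>e. Vg e) \<Longrightarrow> Y u (-2) w \<in> span (\<Union>e. Vg e \<inter> C2s)"
    proof -
      fix w assume "w \<in> (\<Union>e. Vg e)"
      then obtain e where "w \<in> Vg e" by (rule UN_E)
      then show "Y u (-2) w \<in> span (\<Union>e. Vg e \<inter> C2s)" by (rule g1[OF u])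
    qed
    then show ?thesis
      by (rule lin_span_into[where G="\<Union>e. Vg e" and f="Y u (-2)", OF linR1 linR2 subspace_span _ Vg_span])
  qed
  have gen: "Y u (-2) v \<in> span (\<Union>e. Vg e \<inter> C2s)" for u v
  proof -
    have "\<And>w. w \<in> (\<Union>e. Vg e) \<Longrightarrow> Y w (-2) v \<in> span (\<Union>e. Vg e \<inter> C2s)"
    proof -
      fix w assume "w \<in> (\<Union>e. Vg e)"
      then obtain e where "w \<in> Vg e" by (rule UN_E)
      then show "Y w (-2) v \<in> span (\<Union>e. Vg e \<inter> C2s)" by (rule g2)
    qed
    then show ?thesis
      by (rule lin_span_into[where G="\<Union>e. Vg e" and f="\<lambda>u. Y u (-2) v", OF linL1 linL2 subspace_span _ Vg_span])
  qed
  have "{Y u (-2) v | u v. True} \<subseteq> span (\<Union>e. Vg e \<inter> C2s)" using gen by blast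
  then have "span {Y u (-2) v | u v. True} \<subseteq> span (\<Union>e. Vg e \<inter> C2s)"
    by (rule span_minimal[OF _ subspace_span])
  then show ?thesis using c[unfolded C2_def] by (rule subsetD)
qed

lemma split_C2: "b \<in> span (\<Union>e. Vg e \<inter> C2s) \<Longrightarrow>
   \<exists>b1 b2. b = b1 + b2 \<and> b1 \<in> Vg d \<and> b1 \<in> C2s \<and> b2 \<in> span (\<Union>m\<in>-{d}. Vg m)"
proof -
  assume b: "b \<in> span (\<Union>e. Vg e \<inter> C2s)"
  let ?P = "\<lambda>b. \<exists>b1 b2. b = b1 + b2 \<and> b1 \<in> Vg d \<and> b1 \<in> C2s \<and> b2 \<in> span (\<Union>m\<in>-{d}. Vg m)"
  have "subspace (Collect ?P)"
    unfolding subspace_def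
  proof (intro conjI allI ballI)
    show "0 \<in> Collect ?P"
      by (rule CollectI, rule exI[of _ 0], rule exI[of _ 0])
        (simp add: subspace_0[OF Vg_sub] subspace_0[OF C2_sub] span_zero)
  next
    fix x y assume "x \<in> Collect ?P" "y \<in> Collect ?P"
    then obtain x1 x2 y1 y2 where "x = x1 + x2" "x1 \<in> Vg d" "x1 \<in> C2s" "x2 \<in> span (\<Union>m\<in>-{d}. Vg m)"
      "y = y1 + y2" "y1 \<in> Vg d" "y1 \<in> C2s" "y2 \<in> span (\<Union>m\<in>-{d}. Vg m)" by blast
    then show "x + y \<in> Collect ?P"
      by (intro CollectI exI[of _ "x1 + y1"] exI[of _ "x2 + y2"])
        (simp add: algebra_simps subspace_add[OF Vg_sub] subspace_add[OF C2_sub] span_add)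
  next
    fix c x assume "x \<in> Collect ?P"
    then obtain x1 x2 where "x = x1 + x2" "x1 \<in> Vg d" "x1 \<in> C2s" "x2 \<in> span (\<Union>m\<in>-{d}. Vg m)" by blast
    then show "smult c x \<in> Collect ?P"
      by (intro CollectI exI[of _ "smult c x1"] exI[of _ "smult c x2"])
        (simp add: scale_right_distrib subspace_scale[OF Vg_sub] subspace_scale[OF C2_sub] span_scale)
  qed
  moreover have "?P x" if "x \<in> (\<Union>e. Vg e \<inter> C2s)" for x
  proof -
    from that obtain e where x: "x \<in> Vg e" "x \<in> C2s" by blast
    show ?thesis
    proof (cases "e = d")
      case True then show ?thesis using x
        by (intro exI[of _ x] exI[of _ 0]) (simp add: span_zero)
    next
      case False then show ?thesis using x
        by (intro exI[of _ 0] exI[of _ x])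
          (auto simp: subspace_0[OF Vg_sub] subspace_0[OF C2_sub] intro!: span_base)
    qed
  qed
  ultimately show ?thesis using span_induct[OF b, of ?P] by blast
qed

lemma FD: "\<exists>D. F D \<subseteq> C2s"
proof -
  obtain S where S: "finite S" "span (S \<union> C2s) = UNIV" using cof unfolding C2_cofinite_def by blast
  obtain D where D: "S \<subseteq> L D" using bounded_fin[OF S(1)] by blast
  have high: "y \<in> C2s" if y: "y \<in> Vg d" and d: "d \<ge> D" for y d
  proof -
    have "y \<in> span (L D \<union> C2s)" using S(2) span_mono[of "S \<union> C2s" "L D \<union> C2s"] D by blast
    then have "y \<in> {x + y | x y. x \<in> span (L D) \<and> y \<in> span C2s}" by (simp only: span_Un)
    then obtain a b where ab0: "y = a + b" "a \<in> span (L D)" "b \<in> span C2s" by blast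
    have e1: "span (L D) = L D" by (simp add: L_def span_span)
    have e2: "span C2s = C2s" using span_eq_iff[THEN iffD2, OF C2_sub] .
    have ab: "y = a + b" "a \<in> L D" "b \<in> C2s" using ab0[unfolded e1 e2] by auto
    obtain b1 b2 where b: "b = b1 + b2" "b1 \<in> Vg d" "b1 \<in> C2s" "b2 \<in> span (\<Union>m\<in>-{d}. Vg m)"
      using split_C2[OF C2_graded[OF ab(3)]] by blast
    have a2: "a \<in> span (\<Union>m\<in>-{d}. Vg m)"
    proof -
      have "span (\<Union>e\<in>{..<D}. Vg e) \<subseteq> span (\<Union>m\<in>-{d}. Vg m)"
        by (rule span_mono) (use d in force)
      then show ?thesis using ab(2) unfolding L_def by blast
    qed
    have "y - b1 \<in> span (\<Union>m\<in>-{d}. Vg m)"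
    proof -
      have "y - b1 = a + b2" using ab(1) b(1) by (simp add: algebra_simps)
      then show ?thesis using span_add[OF a2 b(4)] by simp
    qed
    moreover have "y - b1 \<in> Vg d" using y b(2) Vg_sub subspace_diff by blast
    ultimately have "y - b1 = 0" using Vg_direct[of d] by blast
    then show ?thesis using b(3) by simp
  qed
  have "F D \<subseteq> C2s" unfolding F_def
    by (rule span_minimal) (use high C2_sub in auto)
  then show ?thesis by blast
qed


lemma iter_Cons[simp]: "iter_prod Y v (n # ns) w = Y v n (iter_prod Y v ns w)"
  by (simp add: iter_prod_def)
lemma iter_Nil[simp]: "iter_prod Y v [] w = w"
  by (simp add: iter_prod_def)

lemma iter_rep: "iter_prod Y v (replicate k a) w = ((Y v a)^^k) w"
  by (induction k) auto

lemma powA_F: "v \<in> F 1 \<Longrightarrow> ((Y v (-1))^^k) v \<in> F (int k + 1)"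
proof (induction k)
  case 0 then show ?case by simp
next
  case (Suc k)
  have "Y v (-1) (((Y v (-1))^^k) v) \<in> F (1 + (int k + 1) - (-1) - 1)"
    by (rule Y_F[OF Suc.prems Suc.IH[OF Suc.prems]])
  then show ?case by (simp add: add.commute)
qed

lemma v0_powA: "Y v 0 (((Y v (-1))^^k) v) \<in> C2s"
proof (induction k)
  case 0 then show ?case using skew by simp
next
  case (Suc k)
  let ?y = "((Y v (-1))^^k) v"
  have "Y v 0 (Y v (-1) ?y) = Y v (-1) (Y v 0 ?y) + Y (Y v 0 v) (-1) ?y" by (rule comm0)
  moreover have "Y v (-1) (Y v 0 ?y) \<in> C2s" by (rule C2_left[OF _ Suc.IH]) simp
  moreover have "Y (Y v 0 v) (-1) ?y \<in> C2s" by (rule C2_right[OF _ skew]) simp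
  ultimately show ?case using subspace_add[OF C2_sub] by simp
qed

lemma iter_cases: "set ns \<subseteq> {0, -1} \<Longrightarrow>
   iter_prod Y v ns v \<in> C2s \<or> iter_prod Y v ns v = ((Y v (-1))^^length ns) v"
proof (induction ns)
  case Nil then show ?case by simp
next
  case (Cons n ns)
  then have n: "n = 0 \<or> n = -1" and IH: "iter_prod Y v ns v \<in> C2s \<or> iter_prod Y v ns v = ((Y v (-1))^^length ns) v"
    by auto
  from IH show ?case
  proof
    assume "iter_prod Y v ns v \<in> C2s"
    then have "Y v n (iter_prod Y v ns v) \<in> C2s" using n by (intro C2_left) auto
    then show ?case by simp
  next
    assume e: "iter_prod Y v ns v = ((Y v (-1))^^length ns) v"
    from n show ?case
    proof
      assume "n = 0" then show ?case using e v0_powA by simp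
    next
      assume "n = -1" then show ?case using e by simp
    qed
  qed
qed

lemma plus_C2: "v \<in> F 1 \<Longrightarrow> \<exists>m. \<forall>ns. set ns \<subseteq> {0, -1} \<and> m \<le> length ns \<longrightarrow> iter_prod Y v ns v \<in> C2s"
proof -
  assume v: "v \<in> F 1"
  obtain D where D: "F D \<subseteq> C2s" using FD by blast
  have "iter_prod Y v ns v \<in> C2s" if ns: "set ns \<subseteq> {0, -1}" "nat D \<le> length ns" for ns
  proof -
    have "((Y v (-1))^^length ns) v \<in> F (int (length ns) + 1)" by (rule powA_F[OF v])
    moreover have "F (int (length ns) + 1) \<subseteq> F D" by (rule F_mono) (use ns(2) in linarith)
    ultimately have "((Y v (-1))^^length ns) v \<in> C2s" using D by blast
    then show ?thesis using iter_cases[OF ns(1), of v] by auto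
  qed
  then show ?thesis by blast
qed

lemma plus_sr: "v \<in> F 1 \<Longrightarrow> C2s \<subseteq> M \<Longrightarrow> v \<in> r01 Y M \<and> v \<in> lsr01 Y M \<and> v \<in> rsr01 Y M"
proof -
  assume v: "v \<in> F 1" and M: "C2s \<subseteq> M"
  obtain m where m: "\<And>ns. set ns \<subseteq> {0, -1} \<Longrightarrow> m \<le> length ns \<Longrightarrow> iter_prod Y v ns v \<in> C2s"
    using plus_C2[OF v] by blast
  have "v \<in> r01 Y M" unfolding r01_def using m M by blast
  moreover have "v \<in> lsr01 Y M" unfolding lsr01_def
  proof (intro CollectI allI exI[of _ m] impI)
    fix b and s :: int and ns :: "int list" assume h: "s \<in> {0, -1} \<and> set ns \<subseteq> {0, -1} \<and> m \<le> length ns"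
    then have "Y b s (iter_prod Y v ns v) \<in> C2s" using m by (intro C2_left) auto
    then show "Y b s (iter_prod Y v ns v) \<in> M" using M by blast
  qed
  moreover have "v \<in> rsr01 Y M" unfolding rsr01_def
  proof (intro CollectI allI exI[of _ m] impI)
    fix w and n :: int and ns :: "int list" assume h: "n \<in> {0, -1} \<and> set ns \<subseteq> {0, -1} \<and> m \<le> length ns"
    then have "Y (iter_prod Y v ns v) n w \<in> C2s" using m by (intro C2_right) auto
    then show "Y (iter_prod Y v ns v) n w \<in> M" using M by blast
  qed
  ultimately show ?thesis by (intro conjI)
qed

lemma lsr_r: "lsr01 Y M \<subseteq> r01 Y M"
proof
  fix v assume v: "v \<in> lsr01 Y M"
  have all: "\<forall>b. \<exists>m::nat. \<forall>s ns. s \<in> {0, -1} \<and> set ns \<subseteq> {0, -1} \<and> m \<le> length ns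
                 \<longrightarrow> Y b s (iter_prod Y v ns v) \<in> M"
    using v unfolding lsr01_def by (rule CollectD)
  have "\<exists>m::nat. \<forall>s ns. s \<in> {0, -1} \<and> set ns \<subseteq> {0, -1} \<and> m \<le> length ns
                 \<longrightarrow> Y vac s (iter_prod Y v ns v) \<in> M"
    by (rule spec[OF all, of vac])
  then obtain m :: nat where m: "\<forall>s ns. s \<in> {0, -1} \<and> set ns \<subseteq> {0, -1} \<and> m \<le> length ns
                 \<longrightarrow> Y vac s (iter_prod Y v ns v) \<in> M" by (rule exE)
  have "\<forall>ns. set ns \<subseteq> {0, -1} \<and> m \<le> length ns \<longrightarrow> iter_prod Y v ns v \<in> M"
  proof (intro allI impI)
    fix ns :: "int list" assume h: "set ns \<subseteq> {0, -1} \<and> m \<le> length ns"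
    have "(-1::int) \<in> {0, -1}" by simp
    then have "Y vac (-1) (iter_prod Y v ns v) \<in> M" using m h by blast
    then show "iter_prod Y v ns v \<in> M" by (simp add: vac_Y)
  qed
  then show "v \<in> r01 Y M" unfolding r01_def mem_Collect_eq by (rule exI[where x=m])
qed

lemma decomp: "\<exists>c x. v = smult c vac + x \<and> x \<in> F 1"
proof -
  have e: "(\<Union>e\<in>{0..}. Vg e) = Vg 0 \<union> (\<Union>e\<in>{1..}. Vg e)"
  proof
    show "(\<Union>e\<in>{0..}. Vg e) \<subseteq> Vg 0 \<union> (\<Union>e\<in>{1..}. Vg e)"
    proof
      fix y assume "y \<in> (\<Union>e\<in>{0::int..}. Vg e)"
      then obtain e where "e \<ge> 0" "y \<in> Vg e" by auto
      then show "y \<in> Vg 0 \<union> (\<Union>e\<in>{1..}. Vg e)"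
        by (cases "e = 0") auto
    qed
  next
    show "Vg 0 \<union> (\<Union>e\<in>{1..}. Vg e) \<subseteq> (\<Union>e\<in>{0..}. Vg e)"
    proof
      fix y assume "y \<in> Vg 0 \<union> (\<Union>e\<in>{1::int..}. Vg e)"
      then consider "y \<in> Vg 0" | e where "e \<ge> 1" "y \<in> Vg e" by auto
      then show "y \<in> (\<Union>e\<in>{0..}. Vg e)"
      proof cases
        case 1 then show ?thesis by auto
      next
        case (2 e) then have "e \<in> {0..}" by simp
        then show ?thesis using 2 by blast
      qed
    qed
  qed
  have "v \<in> F 0" using F0 by simp
  then have "v \<in> span (Vg 0 \<union> (\<Union>e\<in>{1..}. Vg e))" unfolding F_def e .
  then have "v \<in> {a + b | a b. a \<in> span (Vg 0) \<and> b \<in> span (\<Union>e\<in>{1..}. Vg e)}"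
    by (simp only: span_Un)
  then obtain a x where ax: "v = a + x" "a \<in> span (Vg 0)" "x \<in> F 1" unfolding F_def by blast
  have "span (Vg 0) = Vg 0" using span_eq_iff[THEN iffD2, OF Vg_sub] .
  then have "a \<in> span {vac}" using ax(2) Vg_0 by (simp add: span_span)
  then obtain c where "a = smult c vac" unfolding span_singleton by blast
  then show ?thesis using ax by blast
qed

lemma powT_add: "((Y u m)^^j) (a + b) = ((Y u m)^^j) a + ((Y u m)^^j) b"
  by (induction j) (auto simp: linR1)
lemma powT_scale: "((Y u m)^^j) (smult c a) = smult c (((Y u m)^^j) a)"
  by (induction j) (auto simp: linR2)

lemma r_plus:
  assumes M: "subspace M" and C2M: "C2s \<subseteq> M" and vac: "vac \<notin> M" and v: "v \<in> r01 Y M"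
  shows "v \<in> F 1"
proof -
  obtain c x where cx: "v = smult c vac + x" "x \<in> F 1" using decomp by blast
  show ?thesis
  proof (cases "c = 0")
    case True then show ?thesis using cx by simp
  next
    case False
    obtain m where m: "\<And>ns. set ns \<subseteq> {0, -1} \<Longrightarrow> m \<le> length ns \<Longrightarrow> iter_prod Y v ns v \<in> M"
      using v unfolding r01_def by blast
    define T where "T = Y x (-1)"
    define A where "A = Y v (-1)"
    define h where "h j n = (T^^j) ((A^^n) vac)" for j n
    have Ay: "A y = smult c y + T y" for y
      unfolding A_def T_def cx(1) by (simp add: linL1 linL2 vac_Y)
    have hrec: "h j (Suc n) = smult c (h j n) + h (Suc j) n" for j n
    proof -
      have "h j (Suc n) = (T^^j) (A ((A^^n) vac))" unfolding h_def by simp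
      also have "\<dots> = (T^^j) (smult c ((A^^n) vac) + T ((A^^n) vac))" by (simp add: Ay)
      also have "\<dots> = smult c (h j n) + h (Suc j) n"
        unfolding h_def T_def by (simp add: powT_add powT_scale funpow_swap1)
      finally show ?thesis .
    qed
    have hF: "h j n \<in> F (int j)" for j n
    proof (induction j)
      case 0 then show ?case using F0 by simp
    next
      case (Suc j)
      have "Y x (-1) (h j n) \<in> F (1 + int j - (-1) - 1)" by (rule Y_F[OF cx(2) Suc.IH])
      then show ?case unfolding h_def T_def by (simp add: add.commute)
    qed
    have h0: "h 0 n \<in> M" if n: "n \<ge> Suc m" for n
    proof -
      obtain k where k: "n = Suc k" "k \<ge> m" using n by (cases n) auto
      have "h 0 n = (A^^k) (A vac)" unfolding h_def k(1) by (simp add: funpow_swap1)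
      also have "\<dots> = (A^^k) v" unfolding A_def by (simp add: Y_vac)
      also have "\<dots> = iter_prod Y v (replicate k (-1)) v" unfolding A_def by (simp add: iter_rep)
      moreover have "set (replicate k (-1::int)) \<subseteq> {0, -1}" by (induction k) auto
      ultimately show ?thesis using m[of "replicate k (-1)"] k(2) by simp
    qed
    have hhigh: "\<forall>n\<ge>Suc m. h j n \<in> M" for j
    proof (induction j)
      case 0 then show ?case using h0 by blast
    next
      case (Suc j)
      show ?case
      proof (intro allI impI)
        fix n assume n: "n \<ge> Suc m"
        have "h (Suc j) n = h j (Suc n) - smult c (h j n)" using hrec[of j n] by simp
        moreover have "h j (Suc n) \<in> M" "h j n \<in> M" using Suc n by auto
        ultimately show "h (Suc j) n \<in> M" using M subspace_diff subspace_scale by metis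
      qed
    qed
    obtain D where D: "F D \<subseteq> C2s" using FD by blast
    have hD: "h j n \<in> M" if "j \<ge> nat D" for j n
    proof -
      have "F (int j) \<subseteq> F D" by (rule F_mono) (use that in linarith)
      then show ?thesis using hF[of j n] D C2M by blast
    qed
    have step: "\<forall>j. h j n \<in> M" if IH: "\<forall>j. h j (Suc n) \<in> M" for n
    proof -
      have "\<forall>j. nat D - j \<le> i \<longrightarrow> h j n \<in> M" for i
      proof (induction i)
        case 0 then show ?case using hD by auto
      next
        case (Suc i)
        show ?case
        proof (intro allI impI)
          fix j assume j: "nat D - j \<le> Suc i"
          show "h j n \<in> M"
          proof (cases "nat D - j \<le> i")
            case True then show ?thesis using Suc.IH by blast
          next
            case False
            then have "nat D - Suc j \<le> i" using j by linarith
            then have hs: "h (Suc j) n \<in> M" using Suc.IH by blast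
            have "h j (Suc n) - h (Suc j) n = smult c (h j n)" using hrec[of j n] by simp
            then have "smult (1/c) (h j (Suc n) - h (Suc j) n) = h j n" using False \<open>c \<noteq> 0\<close> by simp
            moreover have "smult (1/c) (h j (Suc n) - h (Suc j) n) \<in> M"
              using M IH hs subspace_diff subspace_scale by metis
            ultimately show ?thesis by simp
          qed
        qed
      qed
      then show ?thesis by blast
    qed
    have "\<forall>j. h j 0 \<in> M"
    proof (rule inc_induct[of 0 "Suc m"])
      show "\<forall>j. h j (Suc m) \<in> M" using hhigh by blast
    next
      fix n assume "\<forall>j. h j (Suc n) \<in> M"
      then show "\<forall>j. h j n \<in> M" by (rule step)
    qed simp
    then have "h 0 0 \<in> M" by blast
    then have "vac \<in> M" unfolding h_def by simp
    then show ?thesis using vac by blast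
  qed
qed

end

theorem mainTheorem13:
  fixes smult :: "complex \<Rightarrow> 'v::ab_group_add \<Rightarrow> 'v"
    and Y :: "'v \<Rightarrow> int \<Rightarrow> 'v \<Rightarrow> 'v"
    and vac om :: 'v
    and Vg :: "int \<Rightarrow> 'v set"
    and M :: "'v set"
  assumes "VOA smult Y vac om Vg"
    and "CFT_type smult vac Vg"
    and "C2_cofinite smult Y"
    and "module.subspace smult M"
    and "C2 smult Y \<subseteq> M"
    and "vac \<notin> M"
  shows "MZ01_subspace Y M \<and> r01 Y M = module.span smult (\<Union>n\<in>{1..}. Vg n)"
proof -
  interpret V: voa2 smult Y vac om Vg
    apply (rule voa2.intro)
     apply (rule voa.intro, rule assms(1))
    apply (rule voa2_axioms.intro, rule assms(2), rule assms(3))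
    done
  have r1: "r01 Y M \<subseteq> V.F 1"
  proof
    fix v assume "v \<in> r01 Y M"
    then show "v \<in> V.F 1" by (rule V.r_plus[OF assms(4) assms(5) assms(6)])
  qed
  have r2: "V.F 1 \<subseteq> sr01 Y M"
  proof
    fix v assume "v \<in> V.F 1"
    then have "v \<in> lsr01 Y M" "v \<in> rsr01 Y M" using V.plus_sr[OF _ assms(5)] by blast+
    then show "v \<in> sr01 Y M" unfolding sr01_def by (rule IntI)
  qed
  have r3: "sr01 Y M \<subseteq> r01 Y M"
    unfolding sr01_def using V.lsr_r by (rule subset_trans[OF Int_lower1])
  have eq1: "r01 Y M = V.F 1"
  proof (rule subset_antisym)
    show "r01 Y M \<subseteq> V.F 1" by (rule r1)
    show "V.F 1 \<subseteq> r01 Y M" by (rule subset_trans[OF r2 r3])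
  qed
  have eq2: "sr01 Y M = V.F 1"
  proof (rule subset_antisym)
    show "sr01 Y M \<subseteq> V.F 1" by (rule subset_trans[OF r3 r1])
    show "V.F 1 \<subseteq> sr01 Y M" by (rule r2)
  qed
  have "MZ01_subspace Y M" unfolding MZ01_subspace_def eq1 eq2 ..
  moreover have "r01 Y M = module.span smult (\<Union>n\<in>{1..}. Vg n)" unfolding eq1 V.F_def ..
  ultimately show ?thesis ..
qed

end
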